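(* Let $f,f'\colon\mathbb F_2^n\to\mathbb F_2$ be two Boolean functions (not necessarily bent). If the translation designs $\operatorname{dev}(D_f)$ and $\operatorname{dev}(D_{f'})$ are isomorphic, then the translation designs $\operatorname{dev}(G_f)$ and $\operatorname{dev}(G_{f'})$ are isomorphic.
   Context: For a subset $A$ of an additive group $G$, the development $\operatorname{dev}(A)$ is the incidence structure whose points are the elements of $G$ and whose blocks are the translates $A+g=\{a+g:a\in A\}$, $g\in G$ (one block per $g$; its incidence matrix has rows indexed by $g$). For $f\colon\mathbb F_2^n\to\mathbb F_2$, $D_f=\{\mathbf x: f(\mathbf x)=1\}\subseteq\mathbb F_2^n$ is its support and $G_f=\{(\mathbf x,f(\mathbf x)):\mathbf x\in\mathbb F_2^n\}\subseteq\mathbb F_2^n\times\mathbb F_2$ its graph. Two incidence structures with incidence matrices $M,M'$ are isomorphic if $M=PM'Q$ for some permutation matrices $P,Q$. *)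

theory Defs
  imports "HOL-Analysis.Analysis" "HOL-Library.Z2"
begin

text \<open>F_2^n is modelled as the type bit ^ 'n (with 'n a finite index type),
  F_2^n x F_2 as (bit ^ 'n) \<times> bit; both are ab_group_add with componentwise addition.\<close>

definition translate :: "'a::ab_group_add set \<Rightarrow> 'a \<Rightarrow> 'a set" where
  "translate A g = (\<lambda>a. a + g) ` A"

text \<open>Incidence matrix of dev(A): rows indexed by g (blocks A+g), columns by points p.\<close>
definition dev_incidence :: "'a::ab_group_add set \<Rightarrow> 'a \<Rightarrow> 'a \<Rightarrow> bool" where
  "dev_incidence A g p \<longleftrightarrow> p \<in> translate A g"

text \<open>M = P M' Q for permutation matrices P, Q: M i j = M' (\<sigma> i) (\<tau> j) for bijections.\<close>
definition incidence_iso :: "('r \<Rightarrow> 'c \<Rightarrow> bool) \<Rightarrow> ('r \<Rightarrow> 'c \<Rightarrow> bool) \<Rightarrow> bool" where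
  "incidence_iso M M' \<longleftrightarrow>
     (\<exists>\<sigma> \<tau>. bij \<sigma> \<and> bij \<tau> \<and> (\<forall>i j. M i j = M' (\<sigma> i) (\<tau> j)))"

definition support :: "('v \<Rightarrow> bit) \<Rightarrow> 'v set" where
  "support f = {x. f x = 1}"

definition graph_set :: "('v \<Rightarrow> bit) \<Rightarrow> ('v \<times> bit) set" where
  "graph_set f = {(x, f x) | x. True}"

end

theory Submission
  imports Defs
begin

lemma dev_inc_iff: "dev_incidence A g p \<longleftrightarrow> p - g \<in> A"
  unfolding dev_incidence_def translate_def
  by (auto simp: image_iff) (metis diff_add_cancel)

lemma bit_eq_iff1: "(x::bit) = y \<longleftrightarrow> (x = 1 \<longleftrightarrow> y = 1)"
  by (cases x; cases y) auto

theorem proposition1: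
  fixes f f' :: "bit ^ 'n \<Rightarrow> bit"
  assumes "incidence_iso (dev_incidence (support f)) (dev_incidence (support f'))"
  shows "incidence_iso (dev_incidence (graph_set f)) (dev_incidence (graph_set f'))"
proof -
  obtain \<sigma> \<tau> where s: "bij \<sigma>" and t: "bij \<tau>"
    and e: "\<And>g p. (f (p - g) = 1) = (f' (\<tau> p - \<sigma> g) = 1)"
    using assms unfolding incidence_iso_def dev_inc_iff support_def by auto
  have e2: "f (p - g) = f' (\<tau> p - \<sigma> g)" for p g
    using e[of p g] bit_eq_iff1 by blast
  show ?thesis
    unfolding incidence_iso_def
  proof (intro exI conjI allI)
    show "bij (\<lambda>(g, c). (\<sigma> g, c::bit))"
    proof -
      have i: "inj \<sigma>" and u: "surj \<sigma>" using s by (auto simp: bij_def)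
      show ?thesis unfolding bij_def inj_def
      proof (intro conjI allI impI)
        fix x y :: "(bit^'n)\<times>bit"
        assume "(\<lambda>(g, c). (\<sigma> g, c::bit)) x = (\<lambda>(g, c). (\<sigma> g, c::bit)) y"
        then show "x = y" using i by (cases x; cases y) (auto simp: inj_eq)
      next
        show "surj (\<lambda>(g, c). (\<sigma> g, c::bit))"
        proof (rule surjI[where f="\<lambda>(g, c). (inv \<sigma> g, c)"])
          fix x :: "(bit^'n)\<times>bit"
          show "(\<lambda>(g, c). (\<sigma> g, c)) ((\<lambda>(g, c). (inv \<sigma> g, c)) x) = x"
            using u by (cases x) (auto simp: surj_f_inv_f)
        qed
      qed
    qed
  next
    show "bij (\<lambda>(g, c). (\<tau> g, c::bit))"
    proof -
      have i: "inj \<tau>" and u: "surj \<tau>" using t by (auto simp: bij_def)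
      show ?thesis unfolding bij_def inj_def
      proof (intro conjI allI impI)
        fix x y :: "(bit^'n)\<times>bit"
        assume "(\<lambda>(g, c). (\<tau> g, c::bit)) x = (\<lambda>(g, c). (\<tau> g, c::bit)) y"
        then show "x = y" using i by (cases x; cases y) (auto simp: inj_eq)
      next
        show "surj (\<lambda>(g, c). (\<tau> g, c::bit))"
        proof (rule surjI[where f="\<lambda>(g, c). (inv \<tau> g, c)"])
          fix x :: "(bit^'n)\<times>bit"
          show "(\<lambda>(g, c). (\<tau> g, c)) ((\<lambda>(g, c). (inv \<tau> g, c)) x) = x"
            using u by (cases x) (auto simp: surj_f_inv_f)
        qed
      qed
    qed
  next
    fix i j :: "(bit ^ 'n) \<times> bit"
    show "dev_incidence (graph_set f) i j =
          dev_incidence (graph_set f') ((\<lambda>(g, c). (\<sigma> g, c)) i) ((\<lambda>(g, c). (\<tau> g, c)) j)"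
      by (cases i; cases j) (auto simp: dev_inc_iff graph_set_def e2)
  qed
qed

end
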